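(* Let $\mathcal O\subset\mathbb R^n$ be open and $g:\mathbb R^n\to\mathbb R$ positive. Let $w$ be a solution and $z$ a strict subsolution to the free boundary problem associated with $g$ in $\mathcal O$ (as defined in the context), with $w,z\in C(\overline{\mathcal O})$. If $w\ge z$ in $\overline{\mathcal O}$, then $w>z$ in $\mathcal O$. The analogous statement holds for strict supersolutions (with the inequalities reversed).
   Context: For a function $f$, $f^+:=|f|\chi_{\{f>0\}}$ and $f^-:=|f|\chi_{\{f<0\}}$. A solution to the free boundary problem associated to $g$ in $\mathcal O$ is a continuous $w$ with $w\in C^2(\{w>0\})\cap C^2(\{w<0\})$, $w\in C^1(\overline{\{w>0\}})\cap C^1(\overline{\{w<0\}})$, $\Delta w=0$ on $\{w\ne0\}\cap\mathcal O$, and $g(x)(w^+)_{\nu_x}(x)=-(w^-)_{\nu_x}(x)$ for $x\in\{w=0\}\cap\mathcal O$, where $\nu_x$ is the unit normal to $\{w=0\}$ at $x$ pointing into $\{w>0\}$. A strict subsolution to the free boundary problem associated with $g$ in $\mathcal O$ is $z\in C(\overline{\mathcal O})$ such that: $\{z=0\}$ is locally the graph of a $C^2$ function; $z\in C^1(\overline{\{z>0\}\cap\mathcal O})\cap C^1(\overline{\{z<0\}\cap\mathcal O})$; $\Delta z>0$ on $\{z\neq0\}$; and for $x_0\in\{z=0\}$, $g(x_0)(z^+)_{\nu_{x_0}}(x_0)+(z^-)_{\nu_{x_0}}(x_0)>0$, where $\nu_{x_0}$ is the inward unit normal at $x_0$ to $\{z>0\}$. A strict supersolution is defined analogously with the inequalities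 reversed ($\Delta z<0$ and the boundary quantity $<0$). *)

theory Defs
  imports "HOL-Analysis.Analysis"
begin

definition pos_part :: "('a \<Rightarrow> real) \<Rightarrow> 'a \<Rightarrow> real" where
  "pos_part f x = (if f x > 0 then \<bar>f x\<bar> else 0)"

definition neg_part :: "('a \<Rightarrow> real) \<Rightarrow> 'a \<Rightarrow> real" where
  "neg_part f x = (if f x < 0 then \<bar>f x\<bar> else 0)"

definition C2_on :: "('a::euclidean_space \<Rightarrow> real) \<Rightarrow> 'a set \<Rightarrow> bool" where
  "C2_on f U \<longleftrightarrow> open U \<and>
     (\<forall>x\<in>U. f differentiable (at x)) \<and>
     (\<forall>x\<in>U. \<forall>v. (\<lambda>y. frechet_derivative f (at y) v) differentiable (at x)) \<and>
     (\<forall>v w. continuous_on U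
        (\<lambda>x. frechet_derivative (\<lambda>y. frechet_derivative f (at y) v) (at x) w))"

definition laplacian :: "('a::euclidean_space \<Rightarrow> real) \<Rightarrow> 'a \<Rightarrow> real" where
  "laplacian f x = (\<Sum>b\<in>Basis. frechet_derivative (\<lambda>y. frechet_derivative f (at y) b) (at x) b)"

definition C1_closure :: "('a::euclidean_space \<Rightarrow> real) \<Rightarrow> 'a set \<Rightarrow> bool" where
  "C1_closure f U \<longleftrightarrow> continuous_on (closure U) f \<and>
     (\<exists>G. continuous_on (closure U) G \<and> (\<forall>x\<in>U. (f has_derivative (\<lambda>h. G x \<bullet> h)) (at x)))"

text \<open>Derivative of f in direction \<nu> at a point x of the closure of U, computed from the
  side U (via the continuous extension of the gradient of f from U).\<close>
definition side_deriv :: "('a::euclidean_space \<Rightarrow> real) \<Rightarrow> 'a set \<Rightarrow> 'a \<Rightarrow> 'a \<Rightarrow> real" where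
  "side_deriv f U x \<nu> = (THE d. \<exists>G. continuous_on (closure U) G \<and>
     (\<forall>y\<in>U. (f has_derivative (\<lambda>h. G y \<bullet> h)) (at y)) \<and> d = G x \<bullet> \<nu>)"

text \<open>\<nu> is the unit normal at x to the zero set {f = 0}, pointing into {f > 0}:
  near x, points in the open cone around \<nu> lie in {f > 0} and points in the open cone
  around -\<nu> lie in {f < 0} (for every aperture, on a sufficiently small ball).\<close>
definition fb_normal :: "('a::euclidean_space \<Rightarrow> real) \<Rightarrow> 'a \<Rightarrow> 'a \<Rightarrow> bool" where
  "fb_normal f x \<nu> \<longleftrightarrow> norm \<nu> = 1 \<and>
     (\<forall>\<epsilon>>0. \<exists>\<delta>>0. \<forall>y\<in>ball x \<delta>.
        ((y - x) \<bullet> \<nu> > \<epsilon> * norm (y - x) \<longrightarrow> f y > 0) \<and>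
        ((y - x) \<bullet> \<nu> < - \<epsilon> * norm (y - x) \<longrightarrow> f y < 0))"

definition fb_solution :: "('a::euclidean_space \<Rightarrow> real) \<Rightarrow> 'a set \<Rightarrow> ('a \<Rightarrow> real) \<Rightarrow> bool" where
  "fb_solution g \<Omega> w \<longleftrightarrow>
     continuous_on \<Omega> w \<and>
     C2_on w {x\<in>\<Omega>. w x > 0} \<and> C2_on w {x\<in>\<Omega>. w x < 0} \<and>
     C1_closure w {x\<in>\<Omega>. w x > 0} \<and> C1_closure w {x\<in>\<Omega>. w x < 0} \<and>
     (\<forall>x\<in>\<Omega>. w x \<noteq> 0 \<longrightarrow> laplacian w x = 0) \<and>
     (\<forall>x\<in>\<Omega>. w x = 0 \<longrightarrow> (\<exists>\<nu>. fb_normal w x \<nu>) \<and>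
        (\<forall>\<nu>. fb_normal w x \<nu> \<longrightarrow>
           g x * side_deriv (pos_part w) {y\<in>\<Omega>. w y > 0} x \<nu>
             = - side_deriv (neg_part w) {y\<in>\<Omega>. w y < 0} x \<nu>))"

text \<open>{z = 0} is locally (near each of its points in \<Omega>) the graph of a C^2 function over a
  hyperplane e-perp (e a unit vector); phi is C^2 on the whole space, which is no loss.\<close>
definition locally_C2_graph :: "('a::euclidean_space \<Rightarrow> real) \<Rightarrow> 'a set \<Rightarrow> bool" where
  "locally_C2_graph z \<Omega> \<longleftrightarrow> (\<forall>x\<in>\<Omega>. z x = 0 \<longrightarrow>
     (\<exists>r>0. \<exists>e \<phi>. norm e = 1 \<and> C2_on \<phi> UNIV \<and>
        (\<forall>y\<in>ball x r. z y = 0 \<longleftrightarrow> y \<bullet> e = \<phi> (y - (y \<bullet> e) *\<^sub>R e))))"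

definition strict_subsolution :: "('a::euclidean_space \<Rightarrow> real) \<Rightarrow> 'a set \<Rightarrow> ('a \<Rightarrow> real) \<Rightarrow> bool" where
  "strict_subsolution g \<Omega> z \<longleftrightarrow>
     continuous_on (closure \<Omega>) z \<and> locally_C2_graph z \<Omega> \<and>
     C1_closure z {x\<in>\<Omega>. z x > 0} \<and> C1_closure z {x\<in>\<Omega>. z x < 0} \<and>
     C2_on z {x\<in>\<Omega>. z x > 0} \<and> C2_on z {x\<in>\<Omega>. z x < 0} \<and>
     (\<forall>x\<in>\<Omega>. z x \<noteq> 0 \<longrightarrow> laplacian z x > 0) \<and>
     (\<forall>x\<in>\<Omega>. z x = 0 \<longrightarrow> (\<exists>\<nu>. fb_normal z x \<nu>) \<and>
        (\<forall>\<nu>. fb_normal z x \<nu> \<longrightarrow>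
           g x * side_deriv (pos_part z) {y\<in>\<Omega>. z y > 0} x \<nu>
             + side_deriv (neg_part z) {y\<in>\<Omega>. z y < 0} x \<nu> > 0))"

definition strict_supersolution :: "('a::euclidean_space \<Rightarrow> real) \<Rightarrow> 'a set \<Rightarrow> ('a \<Rightarrow> real) \<Rightarrow> bool" where
  "strict_supersolution g \<Omega> z \<longleftrightarrow>
     continuous_on (closure \<Omega>) z \<and> locally_C2_graph z \<Omega> \<and>
     C1_closure z {x\<in>\<Omega>. z x > 0} \<and> C1_closure z {x\<in>\<Omega>. z x < 0} \<and>
     C2_on z {x\<in>\<Omega>. z x > 0} \<and> C2_on z {x\<in>\<Omega>. z x < 0} \<and>
     (\<forall>x\<in>\<Omega>. z x \<noteq> 0 \<longrightarrow> laplacian z x < 0) \<and>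
     (\<forall>x\<in>\<Omega>. z x = 0 \<longrightarrow> (\<exists>\<nu>. fb_normal z x \<nu>) \<and>
        (\<forall>\<nu>. fb_normal z x \<nu> \<longrightarrow>
           g x * side_deriv (pos_part z) {y\<in>\<Omega>. z y > 0} x \<nu>
             + side_deriv (neg_part z) {y\<in>\<Omega>. z y < 0} x \<nu> < 0))"

end

theory Submission
  imports Defs
begin
lemma dir_deriv_gen:
  fixes f :: "'a::euclidean_space \<Rightarrow> real"
  assumes "(f has_derivative D) (at (x + t *\<^sub>R b))"
  shows "((\<lambda>s. f (x + s *\<^sub>R b)) has_real_derivative D b) (at t)"
proof -
  have lin: "linear D" using assms has_derivative_linear by blast
  have "((\<lambda>s. x + s *\<^sub>R b) has_derivative (\<lambda>s. s *\<^sub>R b)) (at t)"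
    by (auto intro!: derivative_eq_intros)
  from has_derivative_compose[OF this assms]
  have "((\<lambda>s. f (x + s *\<^sub>R b)) has_derivative (\<lambda>s. D (s *\<^sub>R b))) (at t)" .
  moreover have "(\<lambda>s. D (s *\<^sub>R b)) = (*) (D b)"
    using lin by (simp add: linear_cmul fun_eq_iff mult.commute)
  ultimately show ?thesis
    unfolding has_field_derivative_def by simp
qed

lemma second_min:
  fixes f1 f2 :: "'a::euclidean_space \<Rightarrow> real"
  assumes V: "open V" "x \<in> V"
    and d1: "\<forall>y\<in>V. f1 differentiable (at y)" and d2: "\<forall>y\<in>V. f2 differentiable (at y)"
    and dd1: "(\<lambda>y. frechet_derivative f1 (at y) b) differentiable (at x)"
    and dd2: "(\<lambda>y. frechet_derivative f2 (at y) b) differentiable (at x)"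
    and le: "\<forall>y\<in>V. f1 y \<le> f2 y" and eq: "f1 x = f2 x"
  shows "frechet_derivative (\<lambda>y. frechet_derivative f1 (at y) b) (at x) b
       \<le> frechet_derivative (\<lambda>y. frechet_derivative f2 (at y) b) (at x) b"
proof (rule ccontr)
  define D1 where "D1 y = frechet_derivative f1 (at y) b" for y
  define D2 where "D2 y = frechet_derivative f2 (at y) b" for y
  define c where "c = frechet_derivative D2 (at x) b - frechet_derivative D1 (at x) b"
  assume "\<not> ?thesis"
  hence cneg: "c < 0" unfolding c_def D1_def D2_def by simp
  define \<psi> where "\<psi> t = D2 (x + t *\<^sub>R b) - D1 (x + t *\<^sub>R b)" for t
  define \<phi> where "\<phi> t = f2 (x + t *\<^sub>R b) - f1 (x + t *\<^sub>R b)" for t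
  obtain r where r: "r > 0" "\<forall>t. \<bar>t\<bar> < r \<longrightarrow> x + t *\<^sub>R b \<in> V"
  proof -
    obtain e where e: "e > 0" "ball x e \<subseteq> V" using V open_contains_ball by blast
    define r where "r = e / (norm b + 1)"
    have "r > 0" using e norm_ge_zero[of b] unfolding r_def by (intro divide_pos_pos) linarith+
    moreover have "x + t *\<^sub>R b \<in> V" if "\<bar>t\<bar> < r" for t
    proof -
      have "norm (t *\<^sub>R b) = \<bar>t\<bar> * norm b" by simp
      also have "\<dots> \<le> r * norm b" using that by (simp add: mult_right_mono)
      also have "\<dots> < e"
      proof -
        have p: "0 < norm b + 1" using norm_ge_zero[of b] by linarith
        have "e * norm b < e * (norm b + 1)" using e by simp
        thus ?thesis using p by (simp add: r_def pos_divide_less_eq)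
      qed
      finally have "x + t *\<^sub>R b \<in> ball x e" by (simp add: dist_norm)
      thus ?thesis using e by blast
    qed
    ultimately show ?thesis using that by blast
  qed
  have dphi: "DERIV \<phi> t :> \<psi> t" if "\<bar>t\<bar> < r" for t
  proof -
    have y: "x + t *\<^sub>R b \<in> V" using r that by blast
    have "DERIV (\<lambda>s. f2 (x + s *\<^sub>R b)) t :> D2 (x + t *\<^sub>R b)"
      unfolding D2_def by (rule dir_deriv_gen) (use d2 y frechet_derivative_works in blast)
    moreover have "DERIV (\<lambda>s. f1 (x + s *\<^sub>R b)) t :> D1 (x + t *\<^sub>R b)"
      unfolding D1_def by (rule dir_deriv_gen) (use d1 y frechet_derivative_works in blast)
    ultimately show ?thesis unfolding \<phi>_def \<psi>_def by (rule DERIV_diff)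
  qed
  have dpsi: "DERIV \<psi> 0 :> c"
  proof -
    have "DERIV (\<lambda>s. D2 (x + s *\<^sub>R b)) 0 :> frechet_derivative D2 (at x) b"
      by (rule dir_deriv_gen) (use dd2 frechet_derivative_works D2_def in auto)
    moreover have "DERIV (\<lambda>s. D1 (x + s *\<^sub>R b)) 0 :> frechet_derivative D1 (at x) b"
      by (rule dir_deriv_gen) (use dd1 frechet_derivative_works D1_def in auto)
    ultimately show ?thesis unfolding \<psi>_def c_def by (rule DERIV_diff)
  qed
  have psi0: "\<psi> 0 = 0"
  proof (rule DERIV_local_min[OF dphi[of 0] r(1)])
    show "\<forall>y. \<bar>0 - y\<bar> < r \<longrightarrow> \<phi> 0 \<le> \<phi> y"
      using r le eq by (auto simp: \<phi>_def)
  qed (use r in auto)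
  obtain d where d: "d > 0" "\<forall>h>0. h < d \<longrightarrow> \<psi> 0 > \<psi> (0 + h)"
    using DERIV_neg_dec_right[OF dpsi cneg] by blast
  define h where "h = min d r / 2"
  have h: "h > 0" "h < d" "h < r" using d r by (auto simp: h_def)
  obtain \<xi> where xi: "0 < \<xi>" "\<xi> < h" "\<phi> h - \<phi> 0 = (h - 0) * \<psi> \<xi>"
    using MVT2[OF h(1), of \<phi> \<psi>] dphi h by force
  have "\<psi> \<xi> < 0" using d xi h psi0 by force
  hence "h * \<psi> \<xi> < 0" using h by (simp add: mult_pos_neg)
  hence "\<phi> h < \<phi> 0" using xi by simp
  moreover have "\<phi> 0 = 0" using eq by (simp add: \<phi>_def)
  moreover have "\<phi> h \<ge> 0" using r h le by (auto simp: \<phi>_def)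
  ultimately show False by simp
qed

lemma small_scale:
  fixes a n :: real
  assumes "a > 0" "n \<ge> 0" "c \<ge> 0" "c < a / (n + 1)"
  shows "c * n < a"
proof -
  have p: "0 < n + 1" using assms by linarith
  have "c * n \<le> a / (n + 1) * n" using assms mult_right_mono[of c "a / (n+1)" n] by linarith
  also have "\<dots> < a"
  proof -
    have "a * n < a * (n + 1)" using assms by simp
    thus ?thesis using p by (simp add: pos_divide_less_eq)
  qed
  finally show ?thesis .
qed

lemma side_limit:
  fixes f :: "'a::euclidean_space \<Rightarrow> real"
  assumes \<delta>: "\<delta> > 0" and seg: "\<forall>s. 0 < s \<and> s < \<delta> \<longrightarrow> x + s *\<^sub>R \<nu> \<in> U"
    and f0: "f x = 0" and cont: "isCont f x"
    and G: "continuous_on (closure U) G"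
    and der: "\<forall>y\<in>U. (f has_derivative (\<lambda>h. G y \<bullet> h)) (at y)"
  shows "((\<lambda>t. f (x + t *\<^sub>R \<nu>) / t) \<longlongrightarrow> G x \<bullet> \<nu>) (at_right 0)"
proof -
  have xcl: "x \<in> closure U"
  proof (rule Lim_in_closed_set[of "closure U" "\<lambda>s. x + s *\<^sub>R \<nu>" "at_right (0::real)"])
    show "\<forall>\<^sub>F s in at_right 0. x + s *\<^sub>R \<nu> \<in> closure U"
      unfolding eventually_at_right_field using \<delta> seg closure_subset by blast
    show "((\<lambda>s. x + s *\<^sub>R \<nu>) \<longlongrightarrow> x) (at_right 0)"
      by (rule tendsto_eq_intros | simp)+
  qed auto
  define n where "n = norm \<nu>"
  have n0: "n \<ge> 0" by (simp add: n_def)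
  show ?thesis
    unfolding tendsto_iff
  proof (intro allI impI)
    fix e :: real assume e: "e > 0"
    have en: "e / (n + 1) > 0" using e n0 by (intro divide_pos_pos) linarith+
    obtain \<eta> where \<eta>: "\<eta> > 0" "\<forall>y\<in>closure U. dist y x < \<eta> \<longrightarrow> dist (G y) (G x) < e / (n + 1)"
      using G xcl en unfolding continuous_on_iff by blast
    have eta_n: "\<eta> / (n + 1) > 0" using \<eta> n0 by (intro divide_pos_pos) linarith+
    show "\<forall>\<^sub>F t in at_right 0. dist (f (x + t *\<^sub>R \<nu>) / t) (G x \<bullet> \<nu>) < e"
      unfolding eventually_at_right_field
    proof (intro exI[of _ "min \<delta> (\<eta> / (n + 1))"] conjI allI impI)
      show "0 < min \<delta> (\<eta> / (n + 1))" using \<delta> eta_n by simp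
      fix t :: real assume t: "0 < t" "t < min \<delta> (\<eta> / (n + 1))"
      define \<phi> where "\<phi> s = f (x + s *\<^sub>R \<nu>)" for s
      have dphi: "DERIV \<phi> s :> G (x + s *\<^sub>R \<nu>) \<bullet> \<nu>" if "0 < s" "s < \<delta>" for s
        unfolding \<phi>_def by (rule dir_deriv_gen[where D="\<lambda>h. G (x + s *\<^sub>R \<nu>) \<bullet> h"])
          (use der seg that in blast)
      have "continuous_on {0..t} \<phi>"
      proof (rule continuous_at_imp_continuous_on, intro ballI)
        fix s assume s: "s \<in> {0..t}"
        show "isCont \<phi> s"
        proof (cases "s = 0")
          case True
          have "isCont (\<lambda>s. x + s *\<^sub>R \<nu>) s" by (intro continuous_intros)
          moreover have "isCont f (x + s *\<^sub>R \<nu>)" using True cont by simp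
          ultimately show ?thesis unfolding \<phi>_def by (rule isCont_o2)
        next
          case False
          thus ?thesis using dphi[of s] s t DERIV_isCont by force
        qed
      qed
      then obtain l \<xi> where xi: "0 < \<xi>" "\<xi> < t" "DERIV \<phi> \<xi> :> l" "\<phi> t - \<phi> 0 = (t - 0) * l"
        using MVT[OF t(1), of \<phi>] dphi t real_differentiable_def by force
      have l: "l = G (x + \<xi> *\<^sub>R \<nu>) \<bullet> \<nu>"
        using DERIV_unique[OF xi(3) dphi[of \<xi>]] xi t by simp
      have q: "f (x + t *\<^sub>R \<nu>) / t = l" using xi(4) t f0 by (simp add: \<phi>_def)
      define y where "y = x + \<xi> *\<^sub>R \<nu>"
      have yU: "y \<in> closure U" using seg xi t closure_subset unfolding y_def by force
      have "dist y x = \<xi> * n" using xi by (simp add: y_def dist_norm n_def)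
      also have "\<dots> < \<eta>"
        using small_scale[of \<eta> n \<xi>] \<eta> n0 xi t by simp
      finally have "dist (G y) (G x) < e / (n + 1)" using \<eta> yU by blast
      hence "norm (G y - G x) < e / (n + 1)" by (simp add: dist_norm)
      moreover have "\<bar>(G y - G x) \<bullet> \<nu>\<bar> \<le> norm (G y - G x) * n"
        unfolding n_def by (rule Cauchy_Schwarz_ineq2)
      ultimately have "\<bar>(G y - G x) \<bullet> \<nu>\<bar> < e"
        using small_scale[of e n "norm (G y - G x)"] e n0 by simp
      thus "dist (f (x + t *\<^sub>R \<nu>) / t) (G x \<bullet> \<nu>) < e"
        using q l by (simp add: dist_real_def y_def inner_diff_left)
    qed
  qed
qed

lemma side_deriv_eq:
  assumes G0: "continuous_on (closure U) G0" "\<forall>y\<in>U. (f has_derivative (\<lambda>h. G0 y \<bullet> h)) (at y)"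
    and lim: "\<And>G. continuous_on (closure U) G \<Longrightarrow> \<forall>y\<in>U. (f has_derivative (\<lambda>h. G y \<bullet> h)) (at y)
        \<Longrightarrow> ((\<lambda>t. f (x + t *\<^sub>R d) / t) \<longlongrightarrow> G x \<bullet> d) (at_right 0)"
  shows "side_deriv f U x d = G0 x \<bullet> d" "side_deriv f U x (-d) = - (G0 x \<bullet> d)"
proof -
  have uq: "G x \<bullet> d = G0 x \<bullet> d" if "continuous_on (closure U) G" "\<forall>y\<in>U. (f has_derivative (\<lambda>h. G y \<bullet> h)) (at y)" for G
    using tendsto_unique[OF _ lim[OF that] lim[OF G0]] by simp
  show "side_deriv f U x d = G0 x \<bullet> d"
    unfolding side_deriv_def
  proof (rule the_equality)
    show "\<exists>G. continuous_on (closure U) G \<and> (\<forall>y\<in>U. (f has_derivative (\<lambda>h. G y \<bullet> h)) (at y)) \<and> G0 x \<bullet> d = G x \<bullet> d"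
      using G0 by blast
  next
    fix e assume "\<exists>G. continuous_on (closure U) G \<and> (\<forall>y\<in>U. (f has_derivative (\<lambda>h. G y \<bullet> h)) (at y)) \<and> e = G x \<bullet> d"
    then obtain G where "continuous_on (closure U) G" "\<forall>y\<in>U. (f has_derivative (\<lambda>h. G y \<bullet> h)) (at y)" "e = G x \<bullet> d" by blast
    thus "e = G0 x \<bullet> d" using uq by simp
  qed
  show "side_deriv f U x (-d) = - (G0 x \<bullet> d)"
    unfolding side_deriv_def
  proof (rule the_equality)
    show "\<exists>G. continuous_on (closure U) G \<and> (\<forall>y\<in>U. (f has_derivative (\<lambda>h. G y \<bullet> h)) (at y)) \<and> - (G0 x \<bullet> d) = G x \<bullet> - d"
      using G0 by (intro exI[of _ G0]) simp
  next
    fix e assume "\<exists>G. continuous_on (closure U) G \<and> (\<forall>y\<in>U. (f has_derivative (\<lambda>h. G y \<bullet> h)) (at y)) \<and> e = G x \<bullet> - d"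
    then obtain G where "continuous_on (closure U) G" "\<forall>y\<in>U. (f has_derivative (\<lambda>h. G y \<bullet> h)) (at y)" "e = G x \<bullet> - d" by blast
    thus "e = - (G0 x \<bullet> d)" using uq by simp
  qed
qed

lemma open_pos_set:
  fixes f :: "'a::euclidean_space \<Rightarrow> real"
  assumes "open \<Omega>" "continuous_on \<Omega> f"
  shows "open {y\<in>\<Omega>. f y > 0}" "open {y\<in>\<Omega>. f y < 0}"
proof -
  obtain A where "open A" "A \<inter> \<Omega> = {y\<in>\<Omega>. 0 < f y}" using open_Collect_positive[OF assms(2)] by blast
  thus "open {y\<in>\<Omega>. f y > 0}" using assms(1) by (metis open_Int)
  have "continuous_on \<Omega> (\<lambda>y. - f y)" using assms(2) by (intro continuous_intros)
  then obtain B where "open B" "B \<inter> \<Omega> = {y\<in>\<Omega>. 0 < - f y}" using open_Collect_positive by blast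
  moreover have "{y\<in>\<Omega>. 0 < - f y} = {y\<in>\<Omega>. f y < 0}" by auto
  ultimately show "open {y\<in>\<Omega>. f y < 0}" using assms(1) by (metis open_Int)
qed

lemma cone_seg:
  fixes f :: "'a::euclidean_space \<Rightarrow> real"
  assumes "open \<Omega>" "x \<in> \<Omega>" "fb_normal f x \<nu>"
  obtains \<delta> where "\<delta> > 0" "\<forall>s. 0 < s \<and> s < \<delta> \<longrightarrow> x + s *\<^sub>R \<nu> \<in> \<Omega> \<and> f (x + s *\<^sub>R \<nu>) > 0"
    "\<forall>s. 0 < s \<and> s < \<delta> \<longrightarrow> x + s *\<^sub>R (-\<nu>) \<in> \<Omega> \<and> f (x + s *\<^sub>R (-\<nu>)) < 0"
proof -
  have n: "norm \<nu> = 1" and c: "\<forall>\<epsilon>>0. \<exists>\<delta>>0. \<forall>y\<in>ball x \<delta>.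
        ((y - x) \<bullet> \<nu> > \<epsilon> * norm (y - x) \<longrightarrow> f y > 0) \<and>
        ((y - x) \<bullet> \<nu> < - \<epsilon> * norm (y - x) \<longrightarrow> f y < 0)"
    using assms(3) unfolding fb_normal_def by auto
  obtain \<delta>1 where d1: "\<delta>1 > 0" "\<forall>y\<in>ball x \<delta>1.
        ((y - x) \<bullet> \<nu> > (1/2) * norm (y - x) \<longrightarrow> f y > 0) \<and>
        ((y - x) \<bullet> \<nu> < - (1/2) * norm (y - x) \<longrightarrow> f y < 0)"
    using c[rule_format, of "1/2"] by auto
  obtain r where r: "r > 0" "ball x r \<subseteq> \<Omega>" using assms(1,2) open_contains_ball by blast
  have nn: "\<nu> \<bullet> \<nu> = 1" using n by (simp add: dot_square_norm)
  show ?thesis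
  proof (rule that[of "min \<delta>1 r"])
    show "min \<delta>1 r > 0" using d1 r by simp
    show "\<forall>s. 0 < s \<and> s < min \<delta>1 r \<longrightarrow> x + s *\<^sub>R \<nu> \<in> \<Omega> \<and> f (x + s *\<^sub>R \<nu>) > 0"
    proof (intro allI impI conjI)
      fix s assume s: "0 < s \<and> s < min \<delta>1 r"
      have "x + s *\<^sub>R \<nu> \<in> ball x (min \<delta>1 r)" using s n by (simp add: dist_norm)
      thus "x + s *\<^sub>R \<nu> \<in> \<Omega>" using r by auto
      have b: "x + s *\<^sub>R \<nu> \<in> ball x \<delta>1" using s n by (simp add: dist_norm)
      have "(x + s *\<^sub>R \<nu> - x) \<bullet> \<nu> = s" using nn by simp
      moreover have "norm (x + s *\<^sub>R \<nu> - x) = s" using n s by simp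
      ultimately have "(x + s *\<^sub>R \<nu> - x) \<bullet> \<nu> > (1/2) * norm (x + s *\<^sub>R \<nu> - x)" using s by simp
      thus "f (x + s *\<^sub>R \<nu>) > 0" using d1(2) b by blast
    qed
    show "\<forall>s. 0 < s \<and> s < min \<delta>1 r \<longrightarrow> x + s *\<^sub>R (-\<nu>) \<in> \<Omega> \<and> f (x + s *\<^sub>R (-\<nu>)) < 0"
    proof (intro allI impI conjI)
      fix s assume s: "0 < s \<and> s < min \<delta>1 r"
      have "x + s *\<^sub>R (-\<nu>) \<in> ball x (min \<delta>1 r)" using s n by (simp add: dist_norm)
      thus "x + s *\<^sub>R (-\<nu>) \<in> \<Omega>" using r by auto
      have b: "x + s *\<^sub>R (-\<nu>) \<in> ball x \<delta>1" using s n by (simp add: dist_norm)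
      have "(x + s *\<^sub>R (-\<nu>) - x) \<bullet> \<nu> = - s" using nn by simp
      moreover have "norm (x + s *\<^sub>R (-\<nu>) - x) = s" using n s by simp
      ultimately have "(x + s *\<^sub>R (-\<nu>) - x) \<bullet> \<nu> < - (1/2) * norm (x + s *\<^sub>R (-\<nu>) - x)" using s by simp
      thus "f (x + s *\<^sub>R (-\<nu>)) < 0" using d1(2) b by blast
    qed
  qed
qed

lemma pos_side:
  fixes f :: "'a::euclidean_space \<Rightarrow> real"
  assumes \<Omega>: "open \<Omega>" "x \<in> \<Omega>" and fc: "continuous_on \<Omega> f" and f0: "f x = 0"
    and nu: "fb_normal f x \<nu>" and C1: "C1_closure f {y\<in>\<Omega>. f y > 0}"
  shows "((\<lambda>t. pos_part f (x + t *\<^sub>R \<nu>) / t) \<longlongrightarrow> side_deriv (pos_part f) {y\<in>\<Omega>. f y > 0} x \<nu>) (at_right 0)"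
proof -
  define U where "U = {y\<in>\<Omega>. f y > 0}"
  have oU: "open U" unfolding U_def using open_pos_set[OF \<Omega>(1) fc] by blast
  obtain G where G: "continuous_on (closure U) G" "\<forall>y\<in>U. (f has_derivative (\<lambda>h. G y \<bullet> h)) (at y)"
    using C1 unfolding C1_closure_def U_def by blast
  have pG: "\<forall>y\<in>U. (pos_part f has_derivative (\<lambda>h. G y \<bullet> h)) (at y)"
  proof
    fix y assume y: "y \<in> U"
    show "(pos_part f has_derivative (\<lambda>h. G y \<bullet> h)) (at y)"
      by (rule has_derivative_transform_within_open[OF G(2)[rule_format, OF y] oU y]) (simp add: pos_part_def U_def)
  qed
  obtain \<delta> where d: "\<delta> > 0" "\<forall>s. 0 < s \<and> s < \<delta> \<longrightarrow> x + s *\<^sub>R \<nu> \<in> \<Omega> \<and> f (x + s *\<^sub>R \<nu>) > 0"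
    by (rule cone_seg[OF \<Omega> nu]) blast+
  have seg: "\<forall>s. 0 < s \<and> s < \<delta> \<longrightarrow> x + s *\<^sub>R \<nu> \<in> U" using d unfolding U_def by blast
  have pe: "pos_part f = (\<lambda>y. max (f y) 0)" by (auto simp: pos_part_def fun_eq_iff)
  have ic: "isCont f x" using continuous_on_eq_continuous_at[OF \<Omega>(1)] fc \<Omega>(2) by blast
  have pc: "isCont (pos_part f) x" unfolding pe using ic by (intro continuous_intros)
  have p0: "pos_part f x = 0" using f0 by (simp add: pos_part_def)
  have lim: "((\<lambda>t. pos_part f (x + t *\<^sub>R \<nu>) / t) \<longlongrightarrow> G' x \<bullet> \<nu>) (at_right 0)"
    if "continuous_on (closure U) G'" "\<forall>y\<in>U. (pos_part f has_derivative (\<lambda>h. G' y \<bullet> h)) (at y)" for G'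
    by (rule side_limit[OF d(1) seg p0 pc that])
  have "side_deriv (pos_part f) U x \<nu> = G x \<bullet> \<nu>"
    by (rule side_deriv_eq(1)[OF G(1) pG], rule lim, assumption+)
  thus ?thesis using lim[OF G(1) pG] unfolding U_def by simp
qed

lemma neg_side:
  fixes f :: "'a::euclidean_space \<Rightarrow> real"
  assumes \<Omega>: "open \<Omega>" "x \<in> \<Omega>" and fc: "continuous_on \<Omega> f" and f0: "f x = 0"
    and nu: "fb_normal f x \<nu>" and C1: "C1_closure f {y\<in>\<Omega>. f y < 0}"
  shows "((\<lambda>t. neg_part f (x + t *\<^sub>R (-\<nu>)) / t) \<longlongrightarrow> - side_deriv (neg_part f) {y\<in>\<Omega>. f y < 0} x \<nu>) (at_right 0)"
proof -
  define U where "U = {y\<in>\<Omega>. f y < 0}"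
  have oU: "open U" unfolding U_def using open_pos_set[OF \<Omega>(1) fc] by blast
  obtain G where G: "continuous_on (closure U) G" "\<forall>y\<in>U. (f has_derivative (\<lambda>h. G y \<bullet> h)) (at y)"
    using C1 unfolding C1_closure_def U_def by blast
  define G1 where "G1 y = - G y" for y
  have G1c: "continuous_on (closure U) G1" unfolding G1_def using G(1) by (intro continuous_intros)
  have pG: "\<forall>y\<in>U. (neg_part f has_derivative (\<lambda>h. G1 y \<bullet> h)) (at y)"
  proof
    fix y assume y: "y \<in> U"
    have "((\<lambda>y. - f y) has_derivative (\<lambda>h. - (G y \<bullet> h))) (at y)"
      using G(2) y by (intro has_derivative_minus) auto
    hence "((\<lambda>y. - f y) has_derivative (\<lambda>h. G1 y \<bullet> h)) (at y)" by (simp add: G1_def)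
    show "(neg_part f has_derivative (\<lambda>h. G1 y \<bullet> h)) (at y)"
      by (rule has_derivative_transform_within_open[OF \<open>((\<lambda>y. - f y) has_derivative (\<lambda>h. G1 y \<bullet> h)) (at y)\<close> oU y]) (simp add: neg_part_def U_def)
  qed
  obtain \<delta> where d: "\<delta> > 0" "\<forall>s. 0 < s \<and> s < \<delta> \<longrightarrow> x + s *\<^sub>R (-\<nu>) \<in> \<Omega> \<and> f (x + s *\<^sub>R (-\<nu>)) < 0"
    by (rule cone_seg[OF \<Omega> nu]) blast+
  have seg: "\<forall>s. 0 < s \<and> s < \<delta> \<longrightarrow> x + s *\<^sub>R (-\<nu>) \<in> U" using d unfolding U_def by blast
  have pe: "neg_part f = (\<lambda>y. max (- f y) 0)" by (auto simp: neg_part_def fun_eq_iff)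
  have ic: "isCont f x" using continuous_on_eq_continuous_at[OF \<Omega>(1)] fc \<Omega>(2) by blast
  have pc: "isCont (neg_part f) x" unfolding pe using ic by (intro continuous_intros)
  have p0: "neg_part f x = 0" using f0 by (simp add: neg_part_def)
  have lim: "((\<lambda>t. neg_part f (x + t *\<^sub>R (-\<nu>)) / t) \<longlongrightarrow> G' x \<bullet> (-\<nu>)) (at_right 0)"
    if "continuous_on (closure U) G'" "\<forall>y\<in>U. (neg_part f has_derivative (\<lambda>h. G' y \<bullet> h)) (at y)" for G'
    by (rule side_limit[OF d(1) seg p0 pc that])
  have "side_deriv (neg_part f) U x (- (-\<nu>)) = - (G1 x \<bullet> (-\<nu>))"
    by (rule side_deriv_eq(2)[OF G1c pG], rule lim, assumption+)
  thus ?thesis using lim[OF G1c pG] unfolding U_def by simp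
qed

lemma normal_eq:
  fixes f1 f2 :: "'a::euclidean_space \<Rightarrow> real"
  assumes n1: "fb_normal f1 x \<nu>1" and n2: "fb_normal f2 x \<nu>2" and r: "r > 0"
    and le: "\<forall>y\<in>ball x r. f1 y \<le> f2 y"
  shows "\<nu>1 = \<nu>2"
proof (rule ccontr)
  assume ne: "\<nu>1 \<noteq> \<nu>2"
  define d where "d = \<nu>1 - \<nu>2"
  define m where "m = norm d"
  have m: "m > 0" using ne by (simp add: m_def d_def)
  have u1: "\<nu>1 \<bullet> \<nu>1 = 1" and u2: "\<nu>2 \<bullet> \<nu>2 = 1"
    using n1 n2 unfolding fb_normal_def by (auto simp: dot_square_norm)
  have mm: "m * m = 2 - 2 * (\<nu>1 \<bullet> \<nu>2)"
  proof -
    have "m * m = d \<bullet> d" by (simp add: m_def dot_square_norm power2_eq_square)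
    also have "\<dots> = 2 - 2 * (\<nu>1 \<bullet> \<nu>2)" unfolding d_def
      by (simp add: inner_diff_left inner_diff_right u1 u2 inner_commute)
    finally show ?thesis .
  qed
  have dv1: "d \<bullet> \<nu>1 = m * m / 2" using mm u1 by (simp add: d_def inner_diff_left inner_diff_right inner_commute)
  have dv2: "d \<bullet> \<nu>2 = - (m * m / 2)"
  proof -
    have "d \<bullet> \<nu>2 = \<nu>1 \<bullet> \<nu>2 - 1" using u2 by (simp add: d_def inner_diff_left)
    thus ?thesis using mm by (simp add: field_simps)
  qed
  define \<epsilon> where "\<epsilon> = m / 4"
  have e: "\<epsilon> > 0" using m by (simp add: \<epsilon>_def)
  obtain \<delta>1 where d1: "\<delta>1 > 0" "\<forall>y\<in>ball x \<delta>1. ((y - x) \<bullet> \<nu>1 > \<epsilon> * norm (y - x) \<longrightarrow> f1 y > 0)"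
    using n1 e unfolding fb_normal_def by blast
  obtain \<delta>2 where d2: "\<delta>2 > 0" "\<forall>y\<in>ball x \<delta>2. ((y - x) \<bullet> \<nu>2 < - \<epsilon> * norm (y - x) \<longrightarrow> f2 y < 0)"
    using n2 e unfolding fb_normal_def by blast
  define \<rho> where "\<rho> = min r (min \<delta>1 \<delta>2)"
  have \<rho>: "\<rho> > 0" using d1 d2 r by (simp add: \<rho>_def)
  define t where "t = \<rho> / (2 * m)"
  have t: "t > 0" using \<rho> m by (simp add: t_def)
  define y where "y = x + t *\<^sub>R d"
  have ny: "norm (y - x) = t * m" using t by (simp add: y_def m_def)
  have tm: "t * m = \<rho> / 2" using m by (simp add: t_def)
  have yb: "y \<in> ball x r" "y \<in> ball x \<delta>1" "y \<in> ball x \<delta>2"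
    using ny tm \<rho> by (auto simp: dist_norm norm_minus_commute \<rho>_def)
  have i1: "(y - x) \<bullet> \<nu>1 = t * (m * m / 2)" using dv1 by (simp add: y_def)
  have i2: "(y - x) \<bullet> \<nu>2 = - (t * (m * m / 2))" using dv2 by (simp add: y_def)
  have "\<epsilon> * norm (y - x) = t * (m * m / 4)" using ny by (simp add: \<epsilon>_def)
  moreover have "t * (m * m / 4) < t * (m * m / 2)" using t m by simp
  ultimately have a1: "(y - x) \<bullet> \<nu>1 > \<epsilon> * norm (y - x)" and a2: "(y - x) \<bullet> \<nu>2 < - \<epsilon> * norm (y - x)"
    using i1 i2 by linarith+
  have "f1 y > 0" using d1(2) yb(2) a1 by blast
  moreover have "f2 y < 0" using d2(2) yb(3) a2 by blast
  ultimately show False using le yb(1) by force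
qed
lemma interior_case:
  fixes f1 f2 :: "'a::euclidean_space \<Rightarrow> real"
  assumes x: "x \<in> \<Omega>" and le: "\<forall>y\<in>\<Omega>. f1 y \<le> f2 y" and eq: "f1 x = f2 x" and nz: "f1 x \<noteq> 0"
    and c1p: "C2_on f1 {y\<in>\<Omega>. f1 y > 0}" and c1n: "C2_on f1 {y\<in>\<Omega>. f1 y < 0}"
    and c2p: "C2_on f2 {y\<in>\<Omega>. f2 y > 0}" and c2n: "C2_on f2 {y\<in>\<Omega>. f2 y < 0}"
  shows "laplacian f1 x \<le> laplacian f2 x"
proof -
  have main: "laplacian f1 x \<le> laplacian f2 x"
    if A: "C2_on f1 A" and B: "C2_on f2 B" and xA: "x \<in> A" and xB: "x \<in> B"
      and AB: "A \<subseteq> \<Omega>" for A B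
  proof -
    define V where "V = A \<inter> B"
    have oV: "open V" using A B unfolding C2_on_def V_def by blast
    have xV: "x \<in> V" using xA xB by (simp add: V_def)
    show ?thesis unfolding laplacian_def
    proof (rule sum_mono)
      fix b :: 'a
      show "frechet_derivative (\<lambda>y. frechet_derivative f1 (at y) b) (at x) b
          \<le> frechet_derivative (\<lambda>y. frechet_derivative f2 (at y) b) (at x) b"
      proof (rule second_min[OF oV xV])
        show "\<forall>y\<in>V. f1 differentiable (at y)" using A unfolding C2_on_def V_def by blast
        show "\<forall>y\<in>V. f2 differentiable (at y)" using B unfolding C2_on_def V_def by blast
        show "(\<lambda>y. frechet_derivative f1 (at y) b) differentiable (at x)" using A xA unfolding C2_on_def by blast
        show "(\<lambda>y. frechet_derivative f2 (at y) b) differentiable (at x)" using B xB unfolding C2_on_def by blast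
        show "\<forall>y\<in>V. f1 y \<le> f2 y" using le AB unfolding V_def by blast
        show "f1 x = f2 x" by (rule eq)
      qed
    qed
  qed
  show ?thesis
  proof (cases "f1 x > 0")
    case True
    thus ?thesis using main[OF c1p c2p] x eq by auto
  next
    case False
    hence "f1 x < 0" using nz by simp
    thus ?thesis using main[OF c1n c2n] x eq by auto
  qed
qed

lemma bdry_case:
  fixes f1 f2 :: "'a::euclidean_space \<Rightarrow> real"
  assumes \<Omega>: "open \<Omega>" "x \<in> \<Omega>" and le: "\<forall>y\<in>\<Omega>. f1 y \<le> f2 y"
    and z1: "f1 x = 0" and z2: "f2 x = 0"
    and fc1: "continuous_on \<Omega> f1" and fc2: "continuous_on \<Omega> f2"
    and n1: "fb_normal f1 x \<nu>" and n2: "fb_normal f2 x \<nu>"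
    and C1p: "C1_closure f1 {y\<in>\<Omega>. f1 y > 0}" and C1n: "C1_closure f1 {y\<in>\<Omega>. f1 y < 0}"
    and C2p: "C1_closure f2 {y\<in>\<Omega>. f2 y > 0}" and C2n: "C1_closure f2 {y\<in>\<Omega>. f2 y < 0}"
  shows "side_deriv (pos_part f1) {y\<in>\<Omega>. f1 y > 0} x \<nu> \<le> side_deriv (pos_part f2) {y\<in>\<Omega>. f2 y > 0} x \<nu>"
    and "side_deriv (neg_part f1) {y\<in>\<Omega>. f1 y < 0} x \<nu> \<le> side_deriv (neg_part f2) {y\<in>\<Omega>. f2 y < 0} x \<nu>"
proof -
  obtain \<delta> where d: "\<delta> > 0" "\<forall>s. 0 < s \<and> s < \<delta> \<longrightarrow> x + s *\<^sub>R \<nu> \<in> \<Omega> \<and> f1 (x + s *\<^sub>R \<nu>) > 0"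
    "\<forall>s. 0 < s \<and> s < \<delta> \<longrightarrow> x + s *\<^sub>R (-\<nu>) \<in> \<Omega> \<and> f1 (x + s *\<^sub>R (-\<nu>)) < 0"
    by (rule cone_seg[OF \<Omega> n1]) blast+
  have pmono: "pos_part f1 y \<le> pos_part f2 y" if "y \<in> \<Omega>" for y
    using le that by (auto simp: pos_part_def)
  have nmono: "neg_part f2 y \<le> neg_part f1 y" if "y \<in> \<Omega>" for y
    using le that by (auto simp: neg_part_def)
  have ev1: "\<forall>\<^sub>F t in at_right 0. pos_part f1 (x + t *\<^sub>R \<nu>) / t \<le> pos_part f2 (x + t *\<^sub>R \<nu>) / t"
    unfolding eventually_at_right_field
  proof (intro exI[of _ \<delta>] conjI allI impI)
    show "(0::real) < \<delta>" by (rule d(1))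
    fix t :: real assume t: "0 < t" "t < \<delta>"
    show "pos_part f1 (x + t *\<^sub>R \<nu>) / t \<le> pos_part f2 (x + t *\<^sub>R \<nu>) / t"
      using pmono[of "x + t *\<^sub>R \<nu>"] d(2) t by (simp add: divide_right_mono)
  qed
  show "side_deriv (pos_part f1) {y\<in>\<Omega>. f1 y > 0} x \<nu> \<le> side_deriv (pos_part f2) {y\<in>\<Omega>. f2 y > 0} x \<nu>"
    by (rule tendsto_le[OF _ pos_side[OF \<Omega> fc2 z2 n2 C2p] pos_side[OF \<Omega> fc1 z1 n1 C1p] ev1]) simp
  have ev2: "\<forall>\<^sub>F t in at_right 0. neg_part f2 (x + t *\<^sub>R (-\<nu>)) / t \<le> neg_part f1 (x + t *\<^sub>R (-\<nu>)) / t"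
    unfolding eventually_at_right_field
  proof (intro exI[of _ \<delta>] conjI allI impI)
    show "(0::real) < \<delta>" by (rule d(1))
    fix t :: real assume t: "0 < t" "t < \<delta>"
    show "neg_part f2 (x + t *\<^sub>R (-\<nu>)) / t \<le> neg_part f1 (x + t *\<^sub>R (-\<nu>)) / t"
      using nmono[of "x + t *\<^sub>R (-\<nu>)"] d(3) t by (simp add: divide_right_mono)
  qed
  have "- side_deriv (neg_part f2) {y\<in>\<Omega>. f2 y < 0} x \<nu> \<le> - side_deriv (neg_part f1) {y\<in>\<Omega>. f1 y < 0} x \<nu>"
    by (rule tendsto_le[OF _ neg_side[OF \<Omega> fc1 z1 n1 C1n] neg_side[OF \<Omega> fc2 z2 n2 C2n] ev2]) simp
  thus "side_deriv (neg_part f1) {y\<in>\<Omega>. f1 y < 0} x \<nu> \<le> side_deriv (neg_part f2) {y\<in>\<Omega>. f2 y < 0} x \<nu>"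
    by simp
qed

theorem lemma7p7:
  fixes \<Omega> :: "'a::euclidean_space set" and g w z :: "'a \<Rightarrow> real"
  assumes "open \<Omega>"
    and "\<And>x. g x > 0"
    and "fb_solution g \<Omega> w"
    and "continuous_on (closure \<Omega>) w"
    and "continuous_on (closure \<Omega>) z"
  shows "(strict_subsolution g \<Omega> z \<and> (\<forall>x\<in>closure \<Omega>. w x \<ge> z x) \<longrightarrow> (\<forall>x\<in>\<Omega>. w x > z x))
       \<and> (strict_supersolution g \<Omega> z \<and> (\<forall>x\<in>closure \<Omega>. w x \<le> z x) \<longrightarrow> (\<forall>x\<in>\<Omega>. w x < z x))"
proof -
  note \<Omega> = assms(1)
  have W: "continuous_on \<Omega> w" "C2_on w {x\<in>\<Omega>. w x > 0}" "C2_on w {x\<in>\<Omega>. w x < 0}"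
     "C1_closure w {x\<in>\<Omega>. w x > 0}" "C1_closure w {x\<in>\<Omega>. w x < 0}"
     "\<forall>x\<in>\<Omega>. w x \<noteq> 0 \<longrightarrow> laplacian w x = 0"
     "\<forall>x\<in>\<Omega>. w x = 0 \<longrightarrow> (\<exists>\<nu>. fb_normal w x \<nu>) \<and>
        (\<forall>\<nu>. fb_normal w x \<nu> \<longrightarrow>
           g x * side_deriv (pos_part w) {y\<in>\<Omega>. w y > 0} x \<nu>
             = - side_deriv (neg_part w) {y\<in>\<Omega>. w y < 0} x \<nu>)"
    using assms(3) unfolding fb_solution_def by blast+
  have zc: "continuous_on \<Omega> z" using assms(5) closure_subset continuous_on_subset by blast
  show ?thesis
  proof (intro conjI impI ballI)
    fix x assume S: "strict_subsolution g \<Omega> z \<and> (\<forall>x\<in>closure \<Omega>. w x \<ge> z x)" and x: "x \<in> \<Omega>"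
    have Z: "C1_closure z {x\<in>\<Omega>. z x > 0}" "C1_closure z {x\<in>\<Omega>. z x < 0}"
     "C2_on z {x\<in>\<Omega>. z x > 0}" "C2_on z {x\<in>\<Omega>. z x < 0}"
     "\<forall>x\<in>\<Omega>. z x \<noteq> 0 \<longrightarrow> laplacian z x > 0"
     "\<forall>x\<in>\<Omega>. z x = 0 \<longrightarrow> (\<exists>\<nu>. fb_normal z x \<nu>) \<and>
        (\<forall>\<nu>. fb_normal z x \<nu> \<longrightarrow>
           g x * side_deriv (pos_part z) {y\<in>\<Omega>. z y > 0} x \<nu>
             + side_deriv (neg_part z) {y\<in>\<Omega>. z y < 0} x \<nu> > 0)"
      using S unfolding strict_subsolution_def by blast+
    have le: "\<forall>y\<in>\<Omega>. z y \<le> w y" using S closure_subset by blast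
    show "w x > z x"
    proof (rule ccontr)
      assume "\<not> w x > z x"
      hence eq: "z x = w x" using le x by force
      show False
      proof (cases "z x = 0")
        case False
        have "laplacian z x \<le> laplacian w x"
          by (rule interior_case[OF x le eq False Z(3,4) W(2,3)])
        moreover have "laplacian w x = 0" using W(6) x eq False by auto
        moreover have "laplacian z x > 0" using Z(5) x False by auto
        ultimately show False by simp
      next
        case True
        hence w0: "w x = 0" using eq by simp
        obtain \<nu> where nw: "fb_normal w x \<nu>" using W(7) x w0 by blast
        obtain \<mu> where nz: "fb_normal z x \<mu>" using Z(6) x True by blast
        obtain r where r: "r > 0" "ball x r \<subseteq> \<Omega>" using \<Omega> x open_contains_ball by blast
        have "\<mu> = \<nu>" by (rule normal_eq[OF nz nw r(1)]) (use le r in blast)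
        hence nz': "fb_normal z x \<nu>" using nz by simp
        have a: "side_deriv (pos_part z) {y\<in>\<Omega>. z y > 0} x \<nu> \<le> side_deriv (pos_part w) {y\<in>\<Omega>. w y > 0} x \<nu>"
          and b: "side_deriv (neg_part z) {y\<in>\<Omega>. z y < 0} x \<nu> \<le> side_deriv (neg_part w) {y\<in>\<Omega>. w y < 0} x \<nu>"
          using bdry_case[OF \<Omega> x le True w0 zc W(1) nz' nw Z(1,2) W(4,5)] by blast+
        have sol: "g x * side_deriv (pos_part w) {y\<in>\<Omega>. w y > 0} x \<nu> = - side_deriv (neg_part w) {y\<in>\<Omega>. w y < 0} x \<nu>"
          using W(7) x w0 nw by blast
        have sub: "g x * side_deriv (pos_part z) {y\<in>\<Omega>. z y > 0} x \<nu> + side_deriv (neg_part z) {y\<in>\<Omega>. z y < 0} x \<nu> > 0"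
          using Z(6) x True nz' by blast
        have "g x * side_deriv (pos_part z) {y\<in>\<Omega>. z y > 0} x \<nu> \<le> g x * side_deriv (pos_part w) {y\<in>\<Omega>. w y > 0} x \<nu>"
          using a assms(2)[of x] by (simp add: mult_left_mono)
        thus False using sol sub b by linarith
      qed
    qed
  next
    fix x assume S: "strict_supersolution g \<Omega> z \<and> (\<forall>x\<in>closure \<Omega>. w x \<le> z x)" and x: "x \<in> \<Omega>"
    have Z: "C1_closure z {x\<in>\<Omega>. z x > 0}" "C1_closure z {x\<in>\<Omega>. z x < 0}"
     "C2_on z {x\<in>\<Omega>. z x > 0}" "C2_on z {x\<in>\<Omega>. z x < 0}"
     "\<forall>x\<in>\<Omega>. z x \<noteq> 0 \<longrightarrow> laplacian z x < 0"
     "\<forall>x\<in>\<Omega>. z x = 0 \<longrightarrow> (\<exists>\<nu>. fb_normal z x \<nu>) \<and>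
        (\<forall>\<nu>. fb_normal z x \<nu> \<longrightarrow>
           g x * side_deriv (pos_part z) {y\<in>\<Omega>. z y > 0} x \<nu>
             + side_deriv (neg_part z) {y\<in>\<Omega>. z y < 0} x \<nu> < 0)"
      using S unfolding strict_supersolution_def by blast+
    have le: "\<forall>y\<in>\<Omega>. w y \<le> z y" using S closure_subset by blast
    show "w x < z x"
    proof (rule ccontr)
      assume "\<not> w x < z x"
      hence eq: "w x = z x" using le x by force
      show False
      proof (cases "w x = 0")
        case False
        have "laplacian w x \<le> laplacian z x"
          by (rule interior_case[OF x le eq False W(2,3) Z(3,4)])
        moreover have "laplacian w x = 0" using W(6) x False by auto
        moreover have "laplacian z x < 0" using Z(5) x False eq by auto
        ultimately show False by simp
      next
        case True
        hence z0: "z x = 0" using eq by simp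
        obtain \<nu> where nw: "fb_normal w x \<nu>" using W(7) x True by blast
        obtain \<mu> where nz: "fb_normal z x \<mu>" using Z(6) x z0 by blast
        obtain r where r: "r > 0" "ball x r \<subseteq> \<Omega>" using \<Omega> x open_contains_ball by blast
        have "\<nu> = \<mu>" by (rule normal_eq[OF nw nz r(1)]) (use le r in blast)
        hence nz': "fb_normal z x \<nu>" using nz by simp
        have a: "side_deriv (pos_part w) {y\<in>\<Omega>. w y > 0} x \<nu> \<le> side_deriv (pos_part z) {y\<in>\<Omega>. z y > 0} x \<nu>"
          and b: "side_deriv (neg_part w) {y\<in>\<Omega>. w y < 0} x \<nu> \<le> side_deriv (neg_part z) {y\<in>\<Omega>. z y < 0} x \<nu>"
          using bdry_case[OF \<Omega> x le True z0 W(1) zc nw nz' W(4,5) Z(1,2)] by blast+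
        have sol: "g x * side_deriv (pos_part w) {y\<in>\<Omega>. w y > 0} x \<nu> = - side_deriv (neg_part w) {y\<in>\<Omega>. w y < 0} x \<nu>"
          using W(7) x True nw by blast
        have sup: "g x * side_deriv (pos_part z) {y\<in>\<Omega>. z y > 0} x \<nu> + side_deriv (neg_part z) {y\<in>\<Omega>. z y < 0} x \<nu> < 0"
          using Z(6) x z0 nz' by blast
        have "g x * side_deriv (pos_part w) {y\<in>\<Omega>. w y > 0} x \<nu> \<le> g x * side_deriv (pos_part z) {y\<in>\<Omega>. z y > 0} x \<nu>"
          using a assms(2)[of x] by (simp add: mult_left_mono)
        thus False using sol sup b by linarith
      qed
    qed
  qed
qed

end
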